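(* Fix $c > 0$. For a set $L \subset [k+\ell-2]$ with $|L| = \ell - 1$ (where $\ell,k \in \mathbb{N}$), define $$m(L) = \max\big\{ 1 \le m \le k+\ell-2 \,:\, |L \cap [m]| \le c \log m \text{ or } [m] \subset L \big\},$$ $$\ell'(L) = |L \cap [m(L)]| + 1, \qquad k'(L) = m(L) - \ell'(L) + 2.$$ Then for every $\ell, k \in \mathbb{N}$, $$R(\ell,k) \le \sum_{L \in \binom{[k+\ell-2]}{\ell-1}} \binom{k'(L)+\ell'(L)-2}{\ell'(L)-1}^{-1} R\big(\ell'(L), k'(L)\big).$$
   Context: $[m] = \{1,\dots,m\}$, and $\binom{[N]}{j}$ denotes the family of $j$-element subsets of $[N]$. $\log$ is the natural logarithm. For $\ell,k \in \mathbb{N}$, the Ramsey number $R(\ell,k)$ is the smallest $n \in \mathbb{N}$ such that every red-blue colouring of the edges of the complete graph $K_n$ contains either a red copy of $K_\ell$ or a blue copy of $K_k$; by convention $R(1,k) = R(\ell,1) = 1$. *)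

theory Defs
  imports Complex_Main
begin

text \<open>A red-blue colouring of the edges of K_n on vertex set {..<n} is a predicate
  on 2-element sets (True = red, False = blue). The property "every colouring
  contains a red K_l or a blue K_k".\<close>
definition ramsey_prop :: "nat \<Rightarrow> nat \<Rightarrow> nat \<Rightarrow> bool" where
  "ramsey_prop l k n \<longleftrightarrow>
     (\<forall>col :: nat set \<Rightarrow> bool.
        (\<exists>S. S \<subseteq> {..<n} \<and> card S = l \<and> (\<forall>e. e \<subseteq> S \<and> card e = 2 \<longrightarrow> col e)) \<or>
        (\<exists>S. S \<subseteq> {..<n} \<and> card S = k \<and> (\<forall>e. e \<subseteq> S \<and> card e = 2 \<longrightarrow> \<not> col e)))"

definition ramsey_num :: "nat \<Rightarrow> nat \<Rightarrow> nat" where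
  "ramsey_num l k = (LEAST n. ramsey_prop l k n)"

text \<open>m(L) for L \<subseteq> [k+l-2]; N = k + l - 2. The set of candidates always contains 1
  when N \<ge> 1; the inserted 0 only matters in the degenerate case N = 0.\<close>
definition mL :: "real \<Rightarrow> nat \<Rightarrow> nat set \<Rightarrow> nat" where
  "mL c N L = Max (insert 0 {m. 1 \<le> m \<and> m \<le> N \<and>
       (real (card (L \<inter> {1..m})) \<le> c * ln (real m) \<or> {1..m} \<subseteq> L)})"

definition lL :: "real \<Rightarrow> nat \<Rightarrow> nat set \<Rightarrow> nat" where
  "lL c N L = card (L \<inter> {1..mL c N L}) + 1"

definition kL :: "real \<Rightarrow> nat \<Rightarrow> nat set \<Rightarrow> nat" where
  "kL c N L = mL c N L + 2 - lL c N L"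

end

theory Submission
  imports Defs
begin

definition rprop_on :: "nat \<Rightarrow> nat \<Rightarrow> nat set \<Rightarrow> bool" where
  "rprop_on l k V \<longleftrightarrow>
     (\<forall>col :: nat set \<Rightarrow> bool.
        (\<exists>S. S \<subseteq> V \<and> card S = l \<and> (\<forall>e. e \<subseteq> S \<and> card e = 2 \<longrightarrow> col e)) \<or>
        (\<exists>S. S \<subseteq> V \<and> card S = k \<and> (\<forall>e. e \<subseteq> S \<and> card e = 2 \<longrightarrow> \<not> col e)))"

lemma preimage_sub:
  assumes "inj_on f A" "S \<subseteq> A" "e \<subseteq> f ` S"
  shows "\<exists>e'. e' \<subseteq> S \<and> f ` e' = e \<and> card e' = card e"
proof -
  let ?e = "{x \<in> S. f x \<in> e}"
  have im: "f ` ?e = e"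
  proof
    show "f ` ?e \<subseteq> e" by blast
    show "e \<subseteq> f ` ?e"
    proof
      fix y assume y: "y \<in> e"
      then obtain s where s: "s \<in> S" "y = f s" using assms(3) by blast
      then show "y \<in> f ` ?e" using y by blast
    qed
  qed
  have inj: "inj_on f ?e" by (rule inj_on_subset[OF assms(1)]) (use assms(2) in blast)
  have "card (f ` ?e) = card ?e" by (rule card_image[OF inj])
  then have "card ?e = card e" unfolding im by simp
  moreover have "?e \<subseteq> S" by blast
  ultimately show ?thesis using im by blast
qed

lemma transfer:
  assumes "ramsey_prop l k n" "finite V" "n \<le> card V"
  shows "rprop_on l k V"
proof -
  obtain f where f: "f ` {..<n} \<subseteq> V" "inj_on f {..<n}"
    using card_le_inj[of "{..<n}" V] assms by auto
  show ?thesis unfolding rprop_on_def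
  proof
    fix col :: "nat set \<Rightarrow> bool"
    from assms(1)[unfolded ramsey_prop_def, rule_format, of "\<lambda>e. col (f ` e)"]
    show "(\<exists>S. S \<subseteq> V \<and> card S = l \<and> (\<forall>e. e \<subseteq> S \<and> card e = 2 \<longrightarrow> col e)) \<or>
        (\<exists>S. S \<subseteq> V \<and> card S = k \<and> (\<forall>e. e \<subseteq> S \<and> card e = 2 \<longrightarrow> \<not> col e))"
    proof (elim disjE exE conjE)
      fix S assume S: "S \<subseteq> {..<n}" "card S = l" "\<forall>e. e \<subseteq> S \<and> card e = 2 \<longrightarrow> col (f ` e)"
      have injS: "inj_on f S" by (rule inj_on_subset[OF f(2) S(1)])
      have "f ` S \<subseteq> V" using S(1) f(1) by blast
      moreover have "card (f ` S) = l" using card_image[OF injS] S(2) by simp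
      moreover have "\<forall>e. e \<subseteq> f ` S \<and> card e = 2 \<longrightarrow> col e"
      proof (intro allI impI)
        fix e assume e: "e \<subseteq> f ` S \<and> card e = 2"
        then obtain e' where "e' \<subseteq> S" "f ` e' = e" "card e' = card e"
          using preimage_sub[OF f(2) S(1)] by blast
        then show "col e" using S(3) e by metis
      qed
      ultimately show ?thesis by blast
    next
      fix S assume S: "S \<subseteq> {..<n}" "card S = k" "\<forall>e. e \<subseteq> S \<and> card e = 2 \<longrightarrow> \<not> col (f ` e)"
      have injS: "inj_on f S" by (rule inj_on_subset[OF f(2) S(1)])
      have "f ` S \<subseteq> V" using S(1) f(1) by blast
      moreover have "card (f ` S) = k" using card_image[OF injS] S(2) by simp
      moreover have "\<forall>e. e \<subseteq> f ` S \<and> card e = 2 \<longrightarrow> \<not> col e"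
      proof (intro allI impI)
        fix e assume e: "e \<subseteq> f ` S \<and> card e = 2"
        then obtain e' where "e' \<subseteq> S" "f ` e' = e" "card e' = card e"
          using preimage_sub[OF f(2) S(1)] by blast
        then show "\<not> col e" using S(3) e by metis
      qed
      ultimately show ?thesis by blast
    qed
  qed
qed

lemma edge_insert:
  assumes "e \<subseteq> insert v S" "card e = 2"
  shows "e \<subseteq> S \<or> (\<exists>u\<in>S. e = {u, v})"
proof -
  obtain x y where xy: "e = {x, y}" "x \<noteq> y" using assms(2) unfolding card_2_iff by blast
  show ?thesis
  proof (cases "v \<in> e")
    case False then show ?thesis using assms(1) by blast
  next
    case True
    then have "x = v \<or> y = v" using xy by auto
    then show ?thesis
    proof
      assume xv: "x = v" then have "y \<in> S" using xy assms(1) by auto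
      moreover have "e = {y, v}" using xy xv by (simp add: insert_commute)
      ultimately show ?thesis by blast
    next
      assume yv: "y = v" then have "x \<in> S" using xy assms(1) by auto
      moreover have "e = {x, v}" using xy yv by simp
      ultimately show ?thesis by blast
    qed
  qed
qed

lemma ramsey_prop_0:
  assumes "ramsey_prop a b 0" "a \<ge> 1" "b \<ge> 1" shows False
proof -
  have "\<not> (S \<subseteq> {..<0::nat} \<and> card S = a)" for S using assms(2) by auto
  moreover have "\<not> (S \<subseteq> {..<0::nat} \<and> card S = b)" for S using assms(3) by auto
  ultimately show False using assms(1)[unfolded ramsey_prop_def, rule_format, of "\<lambda>_. True"] by blast
qed

lemma insert_red:
  assumes "\<forall>e. e \<subseteq> S \<and> card e = 2 \<longrightarrow> P e" "\<forall>u\<in>S. P {u, v}"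
  shows "\<forall>e. e \<subseteq> insert v S \<and> card e = 2 \<longrightarrow> P e"
proof (intro allI impI)
  fix e assume e: "e \<subseteq> insert v S \<and> card e = 2"
  then have e1: "e \<subseteq> insert v S" and e2: "card e = 2" by simp_all
  have "e \<subseteq> S \<or> (\<exists>u\<in>S. e = {u, v})" by (rule edge_insert[OF e1 e2])
  then show "P e"
  proof
    assume "e \<subseteq> S" then show "P e" using assms(1)[rule_format, of e] e2 by simp
  next
    assume "\<exists>u\<in>S. e = {u, v}"
    then obtain u where "u \<in> S" "e = {u, v}" by blast
    then show "P e" using assms(2) by simp
  qed
qed

lemma ES_step:
  assumes a: "a \<ge> 2" and b: "b \<ge> 2" and p: "ramsey_prop (a-1) b p" and q: "ramsey_prop a (b-1) q"
  shows "ramsey_prop a b (p+q)"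
proof -
  have "p \<noteq> 0"
  proof
    assume "p = 0"
    have a1: "1 \<le> a - 1" using a by simp
    have b1: "1 \<le> b" using b by simp
    show False using ramsey_prop_0[OF _ a1 b1] p \<open>p = 0\<close> by simp
  qed
  define v where "v = p + q - 1"
  have vlt: "v < p + q" using \<open>p \<noteq> 0\<close> v_def by simp
  show ?thesis unfolding ramsey_prop_def
  proof
    fix col :: "nat set \<Rightarrow> bool"
    define Rd where "Rd = {u\<in>{..<v}. col {u, v}}"
    define Bl where "Bl = {u\<in>{..<v}. \<not> col {u, v}}"
    have fin: "finite Rd" "finite Bl" unfolding Rd_def Bl_def by auto
    have un: "Rd \<union> Bl = {..<v}" unfolding Rd_def Bl_def by auto
    have di: "Rd \<inter> Bl = {}" unfolding Rd_def Bl_def by auto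
    have "card (Rd \<union> Bl) = card Rd + card Bl" by (rule card_Un_disjoint[OF fin di])
    then have "card Rd + card Bl = v" unfolding un by simp
    then have cases: "p \<le> card Rd \<or> q \<le> card Bl" using v_def by linarith
    have sub: "Rd \<subseteq> {..<v}" "Bl \<subseteq> {..<v}" unfolding Rd_def Bl_def by auto
    have sub2: "{..<v} \<subseteq> {..<p+q}" using vlt by auto
    have vn: "v \<notin> {..<v}" by simp
    have Rdv: "\<forall>u\<in>Rd. col {u, v}" unfolding Rd_def by simp
    have Blv: "\<forall>u\<in>Bl. \<not> col {u, v}" unfolding Bl_def by simp
    have vpq: "v \<in> {..<p+q}" using vlt by simp
    let ?G = "(\<exists>S. S \<subseteq> {..<p+q} \<and> card S = a \<and> (\<forall>e. e \<subseteq> S \<and> card e = 2 \<longrightarrow> col e)) \<or>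
        (\<exists>S. S \<subseteq> {..<p+q} \<and> card S = b \<and> (\<forall>e. e \<subseteq> S \<and> card e = 2 \<longrightarrow> \<not> col e))"
    from cases show ?G
    proof
      assume "p \<le> card Rd"
      then have "rprop_on (a-1) b Rd" using transfer[OF p fin(1)] by simp
      from this[unfolded rprop_on_def, rule_format, of col] show ?G
      proof (elim disjE exE conjE)
        fix S assume S: "S \<subseteq> Rd" "card S = a - 1" "\<forall>e. e \<subseteq> S \<and> card e = 2 \<longrightarrow> col e"
        have vS: "v \<notin> S" using subset_trans[OF S(1) sub(1)] vn by (auto simp only: subset_iff)
        have finS: "finite S" using S(1) fin(1) by (rule finite_subset)
        have SS: "S \<subseteq> {..<p+q}" by (rule subset_trans[OF S(1) subset_trans[OF sub(1) sub2]])
        have T1: "insert v S \<subseteq> {..<p+q}" using SS vpq by (simp only: insert_subset)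
        have T2: "card (insert v S) = a" using vS finS S(2) a by simp
        have T3: "\<forall>e. e \<subseteq> insert v S \<and> card e = 2 \<longrightarrow> col e"
          by (rule insert_red[OF S(3)]) (use S(1) Rdv in blast)
        show ?G using T1 T2 T3 by blast
      next
        fix S assume S: "S \<subseteq> Rd" "card S = b" "\<forall>e. e \<subseteq> S \<and> card e = 2 \<longrightarrow> \<not> col e"
        have "S \<subseteq> {..<p+q}" by (rule subset_trans[OF S(1) subset_trans[OF sub(1) sub2]])
        then show ?G using S(2,3) by blast
      qed
    next
      assume "q \<le> card Bl"
      then have "rprop_on a (b-1) Bl" using transfer[OF q fin(2)] by simp
      from this[unfolded rprop_on_def, rule_format, of col] show ?G
      proof (elim disjE exE conjE)
        fix S assume S: "S \<subseteq> Bl" "card S = b - 1" "\<forall>e. e \<subseteq> S \<and> card e = 2 \<longrightarrow> \<not> col e"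
        have vS: "v \<notin> S" using subset_trans[OF S(1) sub(2)] vn by (auto simp only: subset_iff)
        have finS: "finite S" using S(1) fin(2) by (rule finite_subset)
        have SS: "S \<subseteq> {..<p+q}" by (rule subset_trans[OF S(1) subset_trans[OF sub(2) sub2]])
        have T1: "insert v S \<subseteq> {..<p+q}" using SS vpq by (simp only: insert_subset)
        have T2: "card (insert v S) = b" using vS finS S(2) b by simp
        have T3: "\<forall>e. e \<subseteq> insert v S \<and> card e = 2 \<longrightarrow> \<not> col e"
          by (rule insert_red[OF S(3)]) (use S(1) Blv in blast)
        show ?G using T1 T2 T3 by blast
      next
        fix S assume S: "S \<subseteq> Bl" "card S = a" "\<forall>e. e \<subseteq> S \<and> card e = 2 \<longrightarrow> col e"
        have "S \<subseteq> {..<p+q}" by (rule subset_trans[OF S(1) subset_trans[OF sub(2) sub2]])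
        then show ?G using S(2,3) by blast
      qed
    qed
  qed
qed

lemma ramsey_exists:
  "a \<ge> 1 \<Longrightarrow> b \<ge> 1 \<Longrightarrow> \<exists>n. ramsey_prop a b n"
proof (induct "a + b" arbitrary: a b rule: less_induct)
  case less
  show ?case
  proof (cases "a = 1 \<or> b = 1")
    case True
    have e: "\<forall>e. e \<subseteq> {0::nat} \<and> card e = 2 \<longrightarrow> P e" for P
    proof (intro allI impI)
      fix e :: "nat set" assume "e \<subseteq> {0} \<and> card e = 2"
      then have "card e \<le> card {0::nat}" by (meson card_mono finite.emptyI finite.insertI)
      with \<open>e \<subseteq> {0} \<and> card e = 2\<close> show "P e" by simp
    qed
    have "ramsey_prop a b 1" unfolding ramsey_prop_def
    proof
      fix col :: "nat set \<Rightarrow> bool"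
      have s: "{0::nat} \<subseteq> {..<1}" "card {0::nat} = 1" by auto
      show "(\<exists>S. S \<subseteq> {..<1} \<and> card S = a \<and> (\<forall>e. e \<subseteq> S \<and> card e = 2 \<longrightarrow> col e)) \<or>
        (\<exists>S. S \<subseteq> {..<1} \<and> card S = b \<and> (\<forall>e. e \<subseteq> S \<and> card e = 2 \<longrightarrow> \<not> col e))"
        using True s e[of col] e[of "\<lambda>e. \<not> col e"] by metis
    qed
    then show ?thesis by blast
  next
    case False
    then have "a \<ge> 2" "b \<ge> 2" using less by auto
    have h1: "1 \<le> a - 1" "a - 1 + b < a + b" "1 \<le> b" "1 \<le> b - 1" "a + (b - 1) < a + b" "1 \<le> a"
      using \<open>a \<ge> 2\<close> \<open>b \<ge> 2\<close> by auto
    obtain p where "ramsey_prop (a-1) b p" using less(1)[OF h1(2) h1(1) h1(3)] by blast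
    moreover obtain q where "ramsey_prop a (b-1) q" using less(1)[OF h1(5) h1(6) h1(4)] by blast
    ultimately show ?thesis using ES_step \<open>a \<ge> 2\<close> \<open>b \<ge> 2\<close> by blast
  qed
qed

lemma ramsey_num_prop: "a \<ge> 1 \<Longrightarrow> b \<ge> 1 \<Longrightarrow> ramsey_prop a b (ramsey_num a b)"
  unfolding ramsey_num_def by (rule LeastI_ex) (rule ramsey_exists)

lemma ramsey_num_ES:
  assumes "a \<ge> 2" "b \<ge> 2"
  shows "ramsey_num a b \<le> ramsey_num (a-1) b + ramsey_num a (b-1)"
proof -
  have "ramsey_prop a b (ramsey_num (a-1) b + ramsey_num a (b-1))"
    using ES_step[OF assms ramsey_num_prop ramsey_num_prop] assms by auto
  then show ?thesis unfolding ramsey_num_def by (rule Least_le)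
qed

definition Pc :: "real \<Rightarrow> nat set \<Rightarrow> nat \<Rightarrow> bool" where
  "Pc c L m \<longleftrightarrow> (real (card (L \<inter> {1..m})) \<le> c * ln (real m) \<or> {1..m} \<subseteq> L)"

definition Tm :: "real \<Rightarrow> nat \<Rightarrow> nat set \<Rightarrow> real" where
  "Tm c N L = real (ramsey_num (lL c N L) (kL c N L)) /
       real ((kL c N L + lL c N L - 2) choose (lL c N L - 1))"

lemma mL_Pc: "mL c N L = Max (insert 0 {m. 1 \<le> m \<and> m \<le> N \<and> Pc c L m})"
  unfolding mL_def Pc_def by simp

lemma mL_le: "mL c N L \<le> N"
proof -
  have "finite (insert 0 {m. 1 \<le> m \<and> m \<le> N \<and> Pc c L m})" by (rule finite_insert[THEN iffD2]) (rule finite_subset[of _ "{..N}"], auto)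
  then show ?thesis unfolding mL_Pc by (subst Max_le_iff) auto
qed

lemma mL_stop:
  assumes "N = 0 \<or> Pc c L N"
  shows "mL c N L = N"
proof (cases "N = 0")
  case True then show ?thesis using mL_le[of c N L] by simp
next
  case False
  have "finite (insert 0 {m. 1 \<le> m \<and> m \<le> N \<and> Pc c L m})" by (rule finite_insert[THEN iffD2]) (rule finite_subset[of _ "{..N}"], auto)
  moreover have "N \<in> insert 0 {m. 1 \<le> m \<and> m \<le> N \<and> Pc c L m}" using False assms by auto
  ultimately have "N \<le> mL c N L" unfolding mL_Pc by (rule Max_ge)
  then show ?thesis using mL_le[of c N L] by simp
qed

lemma Tm_stop:
  assumes "L \<subseteq> {1..N}" "N = 0 \<or> Pc c L N"
  shows "Tm c N L = real (ramsey_num (card L + 1) (N + 1 - card L)) / real (N choose card L)"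
proof -
  have "card L \<le> card {1..N}" by (rule card_mono[OF _ assms(1)]) simp
  then have cL: "card L \<le> N" by simp
  have m: "mL c N L = N" by (rule mL_stop[OF assms(2)])
  have LI: "L \<inter> {1..N} = L" using assms(1) by (rule Int_absorb2)
  have l: "lL c N L = card L + 1" unfolding lL_def m LI ..
  have k: "kL c N L = N + 1 - card L" unfolding kL_def m l by simp
  have e1: "N + 1 - card L + (card L + 1) - 2 = N" using cL by simp
  have e2: "card L + 1 - 1 = card L" by simp
  show ?thesis unfolding Tm_def l k e1 e2 ..
qed

lemma Tm_shift:
  assumes "N \<ge> 1" "\<not> Pc c L N"
  shows "Tm c N L = Tm c (N-1) (L - {N})"
proof -
  have Peq: "Pc c L m = Pc c (L - {N}) m" if "m \<le> N - 1" for m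
  proof -
    have "L \<inter> {1..m} = (L - {N}) \<inter> {1..m}" using that assms(1) by auto
    moreover have "{1..m} \<subseteq> L \<longleftrightarrow> {1..m} \<subseteq> L - {N}" using that assms(1) by auto
    ultimately show ?thesis unfolding Pc_def by simp
  qed
  have "{m. 1 \<le> m \<and> m \<le> N \<and> Pc c L m} = {m. 1 \<le> m \<and> m \<le> N - 1 \<and> Pc c (L - {N}) m}"
  proof (intro set_eqI iffI)
    fix m assume "m \<in> {m. 1 \<le> m \<and> m \<le> N \<and> Pc c L m}"
    then have "1 \<le> m" "m \<le> N" "Pc c L m" by auto
    then have "m \<noteq> N" using assms(2) by auto
    then have "m \<le> N - 1" using \<open>m \<le> N\<close> by simp
    then show "m \<in> {m. 1 \<le> m \<and> m \<le> N - 1 \<and> Pc c (L - {N}) m}"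
      using Peq \<open>1 \<le> m\<close> \<open>Pc c L m\<close> by auto
  next
    fix m assume "m \<in> {m. 1 \<le> m \<and> m \<le> N - 1 \<and> Pc c (L - {N}) m}"
    then show "m \<in> {m. 1 \<le> m \<and> m \<le> N \<and> Pc c L m}" using Peq by auto
  qed
  then have m: "mL c N L = mL c (N-1) (L - {N})" unfolding mL_Pc by simp
  have "L \<inter> {1..mL c N L} = (L - {N}) \<inter> {1..mL c N L}"
    using mL_le[of c "N-1" "L - {N}"] m assms(1) by auto
  then have l: "lL c N L = lL c (N-1) (L - {N})" unfolding lL_def m by simp
  have k: "kL c N L = kL c (N-1) (L - {N})" unfolding kL_def l m ..
  show ?thesis unfolding Tm_def l k ..
qed

lemma Fam_split:
  assumes "j \<ge> 1"
  shows "{L. L \<subseteq> {1..Suc n} \<and> card L = j} =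
    {L. L \<subseteq> {1..n} \<and> card L = j} \<union> insert (Suc n) ` {L. L \<subseteq> {1..n} \<and> card L = j - 1}"
proof (intro set_eqI iffI)
  fix L assume L: "L \<in> {L. L \<subseteq> {1..Suc n} \<and> card L = j}"
  show "L \<in> {L. L \<subseteq> {1..n} \<and> card L = j} \<union> insert (Suc n) ` {L. L \<subseteq> {1..n} \<and> card L = j - 1}"
  proof (cases "Suc n \<in> L")
    case True
    have fin: "finite L" using L finite_subset by blast
    have "L - {Suc n} \<subseteq> {1..n}" using L by auto
    moreover have "card (L - {Suc n}) = j - 1" using L True fin by simp
    moreover have "L = insert (Suc n) (L - {Suc n})" using True by auto
    ultimately show ?thesis by blast
  next
    case False
    then have "L \<subseteq> {1..n}" using L by (auto simp: le_Suc_eq)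
    then show ?thesis using L by blast
  qed
next
  fix L assume "L \<in> {L. L \<subseteq> {1..n} \<and> card L = j} \<union> insert (Suc n) ` {L. L \<subseteq> {1..n} \<and> card L = j - 1}"
  then show "L \<in> {L. L \<subseteq> {1..Suc n} \<and> card L = j}"
  proof
    assume "L \<in> {L. L \<subseteq> {1..n} \<and> card L = j}" then show ?thesis by auto
  next
    assume "L \<in> insert (Suc n) ` {L. L \<subseteq> {1..n} \<and> card L = j - 1}"
    then obtain K where K: "K \<subseteq> {1..n}" "card K = j - 1" "L = insert (Suc n) K" by blast
    have "finite K" "Suc n \<notin> K" using K finite_subset by auto
    then have "card L = j" using K assms by simp
    then show ?thesis using K by auto
  qed
qed

lemma stop_sum:
  assumes "j \<le> N" "N = 0 \<or> real j \<le> c * ln (real N) \<or> j = N"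
  shows "(\<Sum>L\<in>{L. L \<subseteq> {1..N} \<and> card L = j}. Tm c N L) = real (ramsey_num (j+1) (N-j+1))"
proof -
  let ?F = "{L. L \<subseteq> {1..N} \<and> card L = j}"
  let ?v = "real (ramsey_num (j + 1) (N + 1 - j)) / real (N choose j)"
  have "Tm c N L = ?v" if L: "L \<in> ?F" for L
  proof -
    have L1: "L \<subseteq> {1..N}" and L2: "card L = j" using L by auto
    have LI: "L \<inter> {1..N} = L" using L1 by (rule Int_absorb2)
    have "{1..N} \<subseteq> L \<longleftrightarrow> j = N"
    proof
      assume "{1..N} \<subseteq> L" then have "L = {1..N}" using L1 by (rule subset_antisym[rotated])
      then show "j = N" using L2 by simp
    next
      assume "j = N"
      then have "L = {1..N}" using card_subset_eq[OF _ L1] L2 by simp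
      then show "{1..N} \<subseteq> L" by simp
    qed
    then have "N = 0 \<or> Pc c L N" using assms(2) unfolding Pc_def LI L2 by blast
    then show ?thesis using Tm_stop[OF L1] L2 by simp
  qed
  then have "(\<Sum>L\<in>?F. Tm c N L) = (\<Sum>L\<in>?F. ?v)" by (rule sum.cong[OF refl])
  also have "\<dots> = real (N choose j) * ?v" using n_subsets[of "{1..N}" j] by simp
  also have "\<dots> = real (ramsey_num (j + 1) (N + 1 - j))"
    using zero_less_binomial[OF assms(1)] by simp
  finally show ?thesis using assms(1) by (simp add: Suc_diff_le)
qed

lemma main_gen:
  fixes c :: real
  assumes c: "c > 0"
  shows "j \<le> N \<Longrightarrow> real (ramsey_num (j+1) (N-j+1)) \<le> (\<Sum>L\<in>{L. L \<subseteq> {1..N} \<and> card L = j}. Tm c N L)"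
proof (induct N arbitrary: j)
  case 0
  then show ?case using stop_sum[of j 0 c] by simp
next
  case (Suc n)
  show ?case
  proof (cases "real j \<le> c * ln (real (Suc n)) \<or> j = Suc n")
    case True
    then show ?thesis using stop_sum[of j "Suc n" c] Suc.prems by simp
  next
    case False
    have "0 \<le> c * ln (real (Suc n))" using c by simp
    then have j1: "j \<ge> 1" "j \<le> n" using False Suc.prems by auto
    let ?F = "\<lambda>N j. {L. L \<subseteq> {1..N} \<and> card L = j}"
    have fin: "finite (?F n i)" for i by (rule finite_subset[of _ "Pow {1..n}"]) auto
    have disj: "?F n j \<inter> insert (Suc n) ` ?F n (j-1) = {}" by auto
    have inj: "inj_on (insert (Suc n)) (?F n (j-1))"
    proof (rule inj_onI)
      fix A B assume A: "A \<in> ?F n (j-1)" and B: "B \<in> ?F n (j-1)" and AB: "insert (Suc n) A = insert (Suc n) B"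
      have "Suc n \<notin> A" "Suc n \<notin> B" using A B by auto
      then show "A = B" using AB by (metis Diff_insert_absorb)
    qed
    have notP: "\<not> Pc c L (Suc n)" if "L \<subseteq> {1..Suc n}" "card L = j" for L
    proof -
      have "L \<inter> {1..Suc n} = L" using that by auto
      moreover have "\<not> {1..Suc n} \<subseteq> L"
      proof
        assume "{1..Suc n} \<subseteq> L" then have "L = {1..Suc n}" using that by auto
        then show False using that False by auto
      qed
      ultimately show ?thesis using that False unfolding Pc_def by auto
    qed
    have "(\<Sum>L\<in>?F (Suc n) j. Tm c (Suc n) L) =
       (\<Sum>L\<in>?F n j. Tm c (Suc n) L) + (\<Sum>L\<in>insert (Suc n) ` ?F n (j-1). Tm c (Suc n) L)"
      unfolding Fam_split[OF j1(1)] by (rule sum.union_disjoint) (use fin disj in auto)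
    also have "(\<Sum>L\<in>?F n j. Tm c (Suc n) L) = (\<Sum>L\<in>?F n j. Tm c n L)"
    proof (rule sum.cong[OF refl])
      fix L assume L: "L \<in> ?F n j"
      have "L \<subseteq> {1..Suc n}" using L by auto
      then have "\<not> Pc c L (Suc n)" using notP[of L] L by simp
      moreover have "L - {Suc n} = L" using L by auto
      ultimately show "Tm c (Suc n) L = Tm c n L" using Tm_shift[of "Suc n" c L] by simp
    qed
    also have "(\<Sum>L\<in>insert (Suc n) ` ?F n (j-1). Tm c (Suc n) L) = (\<Sum>L\<in>?F n (j-1). Tm c (Suc n) (insert (Suc n) L))"
      using sum.reindex[OF inj, of "Tm c (Suc n)"] by (simp add: comp_def)
    also have "\<dots> = (\<Sum>L\<in>?F n (j-1). Tm c n L)"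
    proof (rule sum.cong[OF refl])
      fix L assume L: "L \<in> ?F n (j-1)"
      have fL: "finite L" using L finite_subset by blast
      have nL: "Suc n \<notin> L" using L by auto
      have "insert (Suc n) L \<subseteq> {1..Suc n}" "card (insert (Suc n) L) = j" using L fL nL j1 by auto
      then have "\<not> Pc c (insert (Suc n) L) (Suc n)" using notP by blast
      moreover have "insert (Suc n) L - {Suc n} = L" using nL by auto
      ultimately show "Tm c (Suc n) (insert (Suc n) L) = Tm c n L" using Tm_shift[of "Suc n" c "insert (Suc n) L"] by simp
    qed
    finally have eq: "(\<Sum>L\<in>?F (Suc n) j. Tm c (Suc n) L) = (\<Sum>L\<in>?F n j. Tm c n L) + (\<Sum>L\<in>?F n (j-1). Tm c n L)" .
    have IH1: "real (ramsey_num (j+1) (n-j+1)) \<le> (\<Sum>L\<in>?F n j. Tm c n L)" using Suc.hyps j1 by blast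
    have IH2: "real (ramsey_num (j-1+1) (n-(j-1)+1)) \<le> (\<Sum>L\<in>?F n (j-1). Tm c n L)" using Suc.hyps[of "j-1"] j1 by simp
    have "ramsey_num (j+1) (Suc n - j + 1) \<le> ramsey_num (j+1-1) (Suc n - j + 1) + ramsey_num (j+1) (Suc n - j + 1 - 1)"
      using ramsey_num_ES[of "j+1" "Suc n - j + 1"] j1 by simp
    moreover have "j+1-1 = j-1+1" "Suc n - j + 1 = n-(j-1)+1" "Suc n - j + 1 - 1 = n - j + 1" using j1 by auto
    ultimately have "real (ramsey_num (j+1) (Suc n - j + 1)) \<le> real (ramsey_num (j-1+1) (n-(j-1)+1)) + real (ramsey_num (j+1) (n-j+1))"
      by (metis of_nat_add of_nat_le_iff)
    then show ?thesis using eq IH1 IH2 by linarith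
  qed
qed

theorem lemma6p2:
  fixes c :: real and l k :: nat
  assumes "c > 0" and "l \<ge> 1" and "k \<ge> 1"
  shows "real (ramsey_num l k) \<le>
    (\<Sum>L\<in>{L. L \<subseteq> {1..k + l - 2} \<and> card L = l - 1}.
       real (ramsey_num (lL c (k + l - 2) L) (kL c (k + l - 2) L)) /
       real ((kL c (k + l - 2) L + lL c (k + l - 2) L - 2) choose (lL c (k + l - 2) L - 1)))"
proof -
  have j: "l - 1 \<le> k + l - 2" using assms by simp
  have e1: "l - 1 + 1 = l" "k + l - 2 - (l - 1) + 1 = k" using assms by auto
  from main_gen[OF assms(1) j] show ?thesis unfolding e1 Tm_def .
qed

end
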